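(* Let $\omega:\Gamma\times\Gamma\to\Gamma$ be a group morphism. There is a subgroup $\Gamma_\omega\le\Gamma$ such that $\omega$ restricts to a surjective group morphism $\omega_{\mathrm{res}}:\Gamma_\omega\times\Gamma_\omega\to\Gamma_\omega$ and $G(\omega)\cong G(\omega_{\mathrm{res}})$.
   Context: $\{0,1\}^*$ denotes the finite words over $\{0,1\}$; $\mathfrak C=\{0,1\}^{\mathbb N}$. A finite complete prefix code is a finite set $\{t_1,\dots,t_n\}\subset\{0,1\}^*$ such that every $x\in\mathfrak C$ has exactly one $t_i$ as prefix. Thompson's group $V$ is the group of homeomorphisms $v$ of $\mathfrak C$ for which there exist finite complete prefix codes $\{t_i\},\{s_i\}$ and a permutation $\sigma$ with $v(t_iw)=s_{\sigma(i)}w$. For a group morphism $\omega:\Gamma^2\to\Gamma$, $K(\omega)$ is the group of maps $a:\{0,1\}^*\to\Gamma$ (pointwise product) with $a(u)=\omega(a(u0),a(u1))$ for all $u$; $V$ acts on it by $\pi(v)(a)(s_{\sigma(i)}u)=a(t_iu)$ for all $i$, $u$ (determining $\pi(v)(a)\in K(\omega)$ uniquely); $G(\omega):=K(\omega)\rtimes V$ with $vav^{-1}=\pi(v)(a)$. *)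

theory Defs
  imports "HOL-Analysis.Analysis" "HOL-Algebra.Algebra"
begin

definition prep :: "bool list \<Rightarrow> (nat \<Rightarrow> bool) \<Rightarrow> (nat \<Rightarrow> bool)" where
  "prep t x = (\<lambda>k. if k < length t then t ! k else x (k - length t))"

definition is_prefix_of_seq :: "bool list \<Rightarrow> (nat \<Rightarrow> bool) \<Rightarrow> bool" where
  "is_prefix_of_seq t x \<longleftrightarrow> (\<forall>k < length t. x k = t ! k)"

definition complete_prefix_code :: "bool list set \<Rightarrow> bool" where
  "complete_prefix_code T \<longleftrightarrow> finite T \<and> (\<forall>x. \<exists>!t. t \<in> T \<and> is_prefix_of_seq t x)"

definition cantor_top :: "(nat \<Rightarrow> bool) topology" where
  "cantor_top = product_topology (\<lambda>_. discrete_topology UNIV) UNIV"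

definition represents ::
  "bool list list \<Rightarrow> bool list list \<Rightarrow> (nat \<Rightarrow> nat) \<Rightarrow> ((nat \<Rightarrow> bool) \<Rightarrow> (nat \<Rightarrow> bool)) \<Rightarrow> bool" where
  "represents ts ss \<sigma> v \<longleftrightarrow>
     length ts = length ss \<and> distinct ts \<and> distinct ss \<and>
     complete_prefix_code (set ts) \<and> complete_prefix_code (set ss) \<and>
     \<sigma> permutes {0..<length ts} \<and>
     (\<forall>i < length ts. \<forall>w. v (prep (ts ! i) w) = prep (ss ! \<sigma> i) w)"

definition thompsonV_set :: "((nat \<Rightarrow> bool) \<Rightarrow> (nat \<Rightarrow> bool)) set" where
  "thompsonV_set = {v. homeomorphic_map cantor_top cantor_top v \<and>
                        (\<exists>ts ss \<sigma>. represents ts ss \<sigma> v)}"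

definition thompsonV :: "((nat \<Rightarrow> bool) \<Rightarrow> (nat \<Rightarrow> bool)) monoid" where
  "thompsonV = \<lparr>carrier = thompsonV_set, mult = (\<lambda>v w. v \<circ> w), one = id\<rparr>"

definition K_set :: "'g monoid \<Rightarrow> ('g \<times> 'g \<Rightarrow> 'g) \<Rightarrow> (bool list \<Rightarrow> 'g) set" where
  "K_set \<Gamma> \<omega> = {a. (\<forall>u. a u \<in> carrier \<Gamma>) \<and>
                      (\<forall>u. a u = \<omega> (a (u @ [False]), a (u @ [True])))}"

definition K_grp :: "'g monoid \<Rightarrow> ('g \<times> 'g \<Rightarrow> 'g) \<Rightarrow> (bool list \<Rightarrow> 'g) monoid" where
  "K_grp \<Gamma> \<omega> = \<lparr>carrier = K_set \<Gamma> \<omega>,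
                  mult = (\<lambda>a b. \<lambda>u. a u \<otimes>\<^bsub>\<Gamma>\<^esub> b u),
                  one = (\<lambda>u. \<one>\<^bsub>\<Gamma>\<^esub>)\<rparr>"

definition piV :: "'g monoid \<Rightarrow> ('g \<times> 'g \<Rightarrow> 'g) \<Rightarrow> ((nat \<Rightarrow> bool) \<Rightarrow> (nat \<Rightarrow> bool))
                    \<Rightarrow> (bool list \<Rightarrow> 'g) \<Rightarrow> (bool list \<Rightarrow> 'g)" where
  "piV \<Gamma> \<omega> v a = (THE b. b \<in> K_set \<Gamma> \<omega> \<and>
      (\<exists>ts ss \<sigma>. represents ts ss \<sigma> v \<and>
         (\<forall>i < length ts. \<forall>u. b (ss ! \<sigma> i @ u) = a (ts ! i @ u))))"

text \<open>G(omega) = K(omega) semidirect V, with v a v^-1 = pi(v)(a), i.e.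
  (a,v)(b,w) = (a pi(v)(b), v w).\<close>
definition G_grp :: "'g monoid \<Rightarrow> ('g \<times> 'g \<Rightarrow> 'g)
      \<Rightarrow> ((bool list \<Rightarrow> 'g) \<times> ((nat \<Rightarrow> bool) \<Rightarrow> (nat \<Rightarrow> bool))) monoid" where
  "G_grp \<Gamma> \<omega> = \<lparr>carrier = K_set \<Gamma> \<omega> \<times> thompsonV_set,
     mult = (\<lambda>(a, v) (b, w). (\<lambda>u. a u \<otimes>\<^bsub>\<Gamma>\<^esub> piV \<Gamma> \<omega> v b u, v \<circ> w)),
     one = (\<lambda>u. \<one>\<^bsub>\<Gamma>\<^esub>, id)\<rparr>"

end

theory Submission
  imports Defs
begin

lemma K_shift:
  assumes "a \<in> K_set \<Gamma> \<omega>"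
  shows "(\<lambda>w. a (u @ w)) \<in> K_set \<Gamma> \<omega>"
proof -
  from assms have A: "\<forall>u. a u \<in> carrier \<Gamma>" and B: "\<forall>u. a u = \<omega> (a (u @ [False]), a (u @ [True]))"
    unfolding K_set_def by blast+
  have D: "a (u @ w) = \<omega> (a (u @ w @ [False]), a (u @ w @ [True]))" for w
    using B[rule_format, of "u @ w"] by (simp only: append_assoc)
  show ?thesis unfolding K_set_def by (simp only: mem_Collect_eq) (use A D in blast)
qed

lemma K_glue:
  assumes "a \<in> K_set \<Gamma> \<omega>" "b \<in> K_set \<Gamma> \<omega>" "\<omega> (a [], b []) \<in> carrier \<Gamma>"
  shows "(\<lambda>w. case w of [] \<Rightarrow> \<omega> (a [], b []) | x # v \<Rightarrow> (if x then b v else a v)) \<in> K_set \<Gamma> \<omega>"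
proof -
  from assms(1) have A: "\<forall>u. a u \<in> carrier \<Gamma>" and B: "\<forall>u. a u = \<omega> (a (u @ [False]), a (u @ [True]))"
    unfolding K_set_def by blast+
  from assms(2) have A': "\<forall>u. b u \<in> carrier \<Gamma>" and B': "\<forall>u. b u = \<omega> (b (u @ [False]), b (u @ [True]))"
    unfolding K_set_def by blast+
  define c where "c = (\<lambda>w. case w of [] \<Rightarrow> \<omega> (a [], b []) | x # v \<Rightarrow> (if x then b v else a v))"
  have C: "c w \<in> carrier \<Gamma>" for w
    using A A' assms(3) unfolding c_def by (cases w) auto
  have D: "c w = \<omega> (c (w @ [False]), c (w @ [True]))" for w
  proof (cases w)
    case Nil
    then show ?thesis unfolding c_def by simp
  next
    case (Cons x v)
    show ?thesis
    proof (cases x)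
      case True
      have "c w = b v" using Cons True unfolding c_def by simp
      also have "\<dots> = \<omega> (b (v @ [False]), b (v @ [True]))" using B' by blast
      also have "\<dots> = \<omega> (c (w @ [False]), c (w @ [True]))" using Cons True unfolding c_def by simp
      finally show ?thesis .
    next
      case False
      have "c w = a v" using Cons False unfolding c_def by simp
      also have "\<dots> = \<omega> (a (v @ [False]), a (v @ [True]))" using B by blast
      also have "\<dots> = \<omega> (c (w @ [False]), c (w @ [True]))" using Cons False unfolding c_def by simp
      finally show ?thesis .
    qed
  qed
  have "c \<in> K_set \<Gamma> \<omega>" unfolding K_set_def using C D by blast
  then show ?thesis unfolding c_def .
qed

context
  fixes \<Gamma> :: "'g monoid" and \<omega> :: "'g \<times> 'g \<Rightarrow> 'g"
  assumes grp: "group \<Gamma>" and hm: "\<omega> \<in> hom (\<Gamma> \<times>\<times> \<Gamma>) \<Gamma>"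
begin

interpretation G: group \<Gamma> by (rule grp)
interpretation GH: group_hom "\<Gamma> \<times>\<times> \<Gamma>" \<Gamma> \<omega>
  by (simp add: group_hom_def group_hom_axioms_def grp hm DirProd_group)

lemma om_closed: "x \<in> carrier \<Gamma> \<Longrightarrow> y \<in> carrier \<Gamma> \<Longrightarrow> \<omega> (x, y) \<in> carrier \<Gamma>"
  using hm unfolding hom_def by (auto simp: DirProd_def)

lemma om_mult: "x1 \<in> carrier \<Gamma> \<Longrightarrow> y1 \<in> carrier \<Gamma> \<Longrightarrow> x2 \<in> carrier \<Gamma> \<Longrightarrow> y2 \<in> carrier \<Gamma> \<Longrightarrow>
   \<omega> (x1 \<otimes>\<^bsub>\<Gamma>\<^esub> x2, y1 \<otimes>\<^bsub>\<Gamma>\<^esub> y2) = \<omega> (x1, y1) \<otimes>\<^bsub>\<Gamma>\<^esub> \<omega> (x2, y2)"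
  using hm unfolding hom_def by (auto simp: DirProd_def)

lemma om_one: "\<omega> (\<one>\<^bsub>\<Gamma>\<^esub>, \<one>\<^bsub>\<Gamma>\<^esub>) = \<one>\<^bsub>\<Gamma>\<^esub>"
  using GH.hom_one by (simp add: DirProd_def)

lemma om_inv: "x \<in> carrier \<Gamma> \<Longrightarrow> y \<in> carrier \<Gamma> \<Longrightarrow>
   \<omega> (inv\<^bsub>\<Gamma>\<^esub> x, inv\<^bsub>\<Gamma>\<^esub> y) = inv\<^bsub>\<Gamma>\<^esub> \<omega> (x, y)"
  using GH.hom_inv[of "(x,y)"] by (simp add: DirProd_group grp inv_DirProd)

definition HH where "HH = {a [] | a. a \<in> K_set \<Gamma> \<omega>}"

lemma HH_sub: "HH \<subseteq> carrier \<Gamma>"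
  unfolding HH_def K_set_def by blast

lemma K_vals: "a \<in> K_set \<Gamma> \<omega> \<Longrightarrow> a u \<in> HH"
proof -
  assume "a \<in> K_set \<Gamma> \<omega>"
  then have "(\<lambda>w. a (u @ w)) \<in> K_set \<Gamma> \<omega>" by (rule K_shift)
  then have "\<exists>c. a u = c [] \<and> c \<in> K_set \<Gamma> \<omega>" by (intro exI[of _ "\<lambda>w. a (u @ w)"]) simp
  then show ?thesis unfolding HH_def by simp
qed

lemma HH_subgroup: "subgroup HH \<Gamma>"
proof (rule G.subgroupI)
  show "HH \<subseteq> carrier \<Gamma>" by (rule HH_sub)
  have "(\<lambda>u. \<one>\<^bsub>\<Gamma>\<^esub>) \<in> K_set \<Gamma> \<omega>" unfolding K_set_def by (simp add: om_one)
  then show "HH \<noteq> {}" unfolding HH_def by blast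
next
  fix h assume "h \<in> HH"
  then obtain a where a: "a \<in> K_set \<Gamma> \<omega>" "h = a []" unfolding HH_def by blast
  have "(\<lambda>u. inv\<^bsub>\<Gamma>\<^esub> a u) \<in> K_set \<Gamma> \<omega>"
  proof -
    from a(1) have A: "\<forall>u. a u \<in> carrier \<Gamma>" and B: "\<forall>u. a u = \<omega> (a (u @ [False]), a (u @ [True]))"
      unfolding K_set_def by blast+
    have C: "\<forall>u. inv\<^bsub>\<Gamma>\<^esub> a u \<in> carrier \<Gamma>" using A by simp
    have D: "inv\<^bsub>\<Gamma>\<^esub> a u = \<omega> (inv\<^bsub>\<Gamma>\<^esub> a (u @ [False]), inv\<^bsub>\<Gamma>\<^esub> a (u @ [True]))" for u
    proof -
      have "inv\<^bsub>\<Gamma>\<^esub> a u = inv\<^bsub>\<Gamma>\<^esub> \<omega> (a (u @ [False]), a (u @ [True]))" using B by metis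
      also have "\<dots> = \<omega> (inv\<^bsub>\<Gamma>\<^esub> a (u @ [False]), inv\<^bsub>\<Gamma>\<^esub> a (u @ [True]))"
        using A by (intro om_inv[symmetric]) blast+
      finally show ?thesis .
    qed
    show ?thesis unfolding K_set_def using C D by blast
  qed
  then have "\<exists>c. inv\<^bsub>\<Gamma>\<^esub> h = c [] \<and> c \<in> K_set \<Gamma> \<omega>" using a(2)
    by (intro exI[of _ "\<lambda>u. inv\<^bsub>\<Gamma>\<^esub> a u"]) blast
  then show "inv\<^bsub>\<Gamma>\<^esub> h \<in> HH" unfolding HH_def by simp
next
  fix h g assume "h \<in> HH" "g \<in> HH"
  then obtain a b where a: "a \<in> K_set \<Gamma> \<omega>" "h = a []" "b \<in> K_set \<Gamma> \<omega>" "g = b []"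
    unfolding HH_def by blast
  have "(\<lambda>u. a u \<otimes>\<^bsub>\<Gamma>\<^esub> b u) \<in> K_set \<Gamma> \<omega>"
  proof -
    from a(1) have A: "\<forall>u. a u \<in> carrier \<Gamma>" and B: "\<forall>u. a u = \<omega> (a (u @ [False]), a (u @ [True]))"
      unfolding K_set_def by blast+
    from a(3) have A': "\<forall>u. b u \<in> carrier \<Gamma>" and B': "\<forall>u. b u = \<omega> (b (u @ [False]), b (u @ [True]))"
      unfolding K_set_def by blast+
    have C: "\<forall>u. a u \<otimes>\<^bsub>\<Gamma>\<^esub> b u \<in> carrier \<Gamma>" using A A' by simp
    have D: "a u \<otimes>\<^bsub>\<Gamma>\<^esub> b u = \<omega> (a (u @ [False]) \<otimes>\<^bsub>\<Gamma>\<^esub> b (u @ [False]), a (u @ [True]) \<otimes>\<^bsub>\<Gamma>\<^esub> b (u @ [True]))" for u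
    proof -
      have "a u \<otimes>\<^bsub>\<Gamma>\<^esub> b u = \<omega> (a (u @ [False]), a (u @ [True])) \<otimes>\<^bsub>\<Gamma>\<^esub> \<omega> (b (u @ [False]), b (u @ [True]))"
        using B B' by metis
      also have "\<dots> = \<omega> (a (u @ [False]) \<otimes>\<^bsub>\<Gamma>\<^esub> b (u @ [False]), a (u @ [True]) \<otimes>\<^bsub>\<Gamma>\<^esub> b (u @ [True]))"
        using A A' by (intro om_mult[symmetric]) blast+
      finally show ?thesis .
    qed
    show ?thesis unfolding K_set_def using C D by blast
  qed
  then have "\<exists>c. h \<otimes>\<^bsub>\<Gamma>\<^esub> g = c [] \<and> c \<in> K_set \<Gamma> \<omega>" using a(2,4)
    by (intro exI[of _ "\<lambda>u. a u \<otimes>\<^bsub>\<Gamma>\<^esub> b u"]) blast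
  then show "h \<otimes>\<^bsub>\<Gamma>\<^esub> g \<in> HH" unfolding HH_def by simp
qed

lemma HH_image: "\<omega> ` (HH \<times> HH) = HH"
proof
  show "\<omega> ` (HH \<times> HH) \<subseteq> HH"
  proof clarify
    fix h g assume "h \<in> HH" "g \<in> HH"
    then obtain a b where a: "a \<in> K_set \<Gamma> \<omega>" "h = a []" "b \<in> K_set \<Gamma> \<omega>" "g = b []"
      unfolding HH_def by blast
    have "a [] \<in> carrier \<Gamma>" "b [] \<in> carrier \<Gamma>" using a HH_sub \<open>h \<in> HH\<close> \<open>g \<in> HH\<close> by auto
    then have "\<omega> (a [], b []) \<in> carrier \<Gamma>" by (rule om_closed)
    from K_glue[OF a(1) a(3) this]
    have "\<exists>c. \<omega> (h, g) = c [] \<and> c \<in> K_set \<Gamma> \<omega>"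
      using a by (intro exI[of _ "\<lambda>w. case w of [] \<Rightarrow> \<omega> (a [], b []) | x # v \<Rightarrow> (if x then b v else a v)"]) simp
    then show "\<omega> (h, g) \<in> HH" unfolding HH_def by simp
  qed
next
  show "HH \<subseteq> \<omega> ` (HH \<times> HH)"
  proof
    fix h assume "h \<in> HH"
    then obtain a where a: "a \<in> K_set \<Gamma> \<omega>" "h = a []" unfolding HH_def by blast
    from a(1) have "\<forall>u. a u = \<omega> (a (u @ [False]), a (u @ [True]))" unfolding K_set_def
      by blast
    then have "a [] = \<omega> (a ([] @ [False]), a ([] @ [True]))" by (rule spec)
    then have "h = \<omega> (a [False], a [True])" using a(2) by (simp only: append_Nil)
    moreover have "(a [False], a [True]) \<in> HH \<times> HH" using K_vals[OF a(1)] by (intro SigmaI)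
    ultimately show "h \<in> \<omega> ` (HH \<times> HH)" by (rule image_eqI)
  qed
qed

lemma HH_hom: "\<omega> \<in> hom (\<Gamma>\<lparr>carrier := HH\<rparr> \<times>\<times> \<Gamma>\<lparr>carrier := HH\<rparr>) (\<Gamma>\<lparr>carrier := HH\<rparr>)"
  unfolding hom_def
proof (intro CollectI conjI ballI)
  show "\<omega> \<in> carrier (\<Gamma>\<lparr>carrier := HH\<rparr> \<times>\<times> \<Gamma>\<lparr>carrier := HH\<rparr>) \<rightarrow> carrier (\<Gamma>\<lparr>carrier := HH\<rparr>)"
    using HH_image by (auto simp: DirProd_def)
next
  fix x y assume "x \<in> carrier (\<Gamma>\<lparr>carrier := HH\<rparr> \<times>\<times> \<Gamma>\<lparr>carrier := HH\<rparr>)"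
     "y \<in> carrier (\<Gamma>\<lparr>carrier := HH\<rparr> \<times>\<times> \<Gamma>\<lparr>carrier := HH\<rparr>)"
  then obtain x1 x2 y1 y2 where xy: "x = (x1, x2)" "y = (y1, y2)" "x1 \<in> HH" "x2 \<in> HH" "y1 \<in> HH" "y2 \<in> HH"
    by (cases x, cases y) (simp add: DirProd_def)
  then have c: "x1 \<in> carrier \<Gamma>" "x2 \<in> carrier \<Gamma>" "y1 \<in> carrier \<Gamma>" "y2 \<in> carrier \<Gamma>" using HH_sub by blast+
  have "\<omega> (x1 \<otimes>\<^bsub>\<Gamma>\<^esub> y1, x2 \<otimes>\<^bsub>\<Gamma>\<^esub> y2) = \<omega> (x1, x2) \<otimes>\<^bsub>\<Gamma>\<^esub> \<omega> (y1, y2)"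
    using c by (rule om_mult)
  then show "\<omega> (x \<otimes>\<^bsub>\<Gamma>\<lparr>carrier := HH\<rparr> \<times>\<times> \<Gamma>\<lparr>carrier := HH\<rparr>\<^esub> y) = \<omega> x \<otimes>\<^bsub>\<Gamma>\<lparr>carrier := HH\<rparr>\<^esub> \<omega> y"
    unfolding xy(1,2) DirProd_def by simp
qed

lemma K_eq: "K_set (\<Gamma>\<lparr>carrier := HH\<rparr>) \<omega> = K_set \<Gamma> \<omega>"
proof (intro equalityI subsetI)
  fix a assume a: "a \<in> K_set (\<Gamma>\<lparr>carrier := HH\<rparr>) \<omega>"
  then have A0: "\<forall>u. a u \<in> carrier (\<Gamma>\<lparr>carrier := HH\<rparr>)" unfolding K_set_def by blast
  then have A: "\<forall>u. a u \<in> HH" by simp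
  from a have B: "\<forall>u. a u = \<omega> (a (u @ [False]), a (u @ [True]))" unfolding K_set_def by blast
  have C: "\<forall>u. a u \<in> carrier \<Gamma>" using A HH_sub by blast
  show "a \<in> K_set \<Gamma> \<omega>" unfolding K_set_def using B C by blast
next
  fix a assume a: "a \<in> K_set \<Gamma> \<omega>"
  have A: "\<forall>u. a u \<in> HH" using K_vals[OF a] by blast
  from a have B: "\<forall>u. a u = \<omega> (a (u @ [False]), a (u @ [True]))" unfolding K_set_def by blast
  show "a \<in> K_set (\<Gamma>\<lparr>carrier := HH\<rparr>) \<omega>" 
  proof -
    have "\<forall>u. a u \<in> carrier (\<Gamma>\<lparr>carrier := HH\<rparr>)" using A by simp
    then show ?thesis unfolding K_set_def using B by blast
  qed
qed

lemma G_eq: "G_grp (\<Gamma>\<lparr>carrier := HH\<rparr>) \<omega> = G_grp \<Gamma> \<omega>"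
  unfolding G_grp_def piV_def K_eq by simp

end

theorem mainTheorem16:
  fixes \<Gamma> :: "'g monoid" and \<omega> :: "'g \<times> 'g \<Rightarrow> 'g"
  assumes "group \<Gamma>" and "\<omega> \<in> hom (\<Gamma> \<times>\<times> \<Gamma>) \<Gamma>"
  shows "\<exists>H. subgroup H \<Gamma> \<and>
             \<omega> \<in> hom (\<Gamma>\<lparr>carrier := H\<rparr> \<times>\<times> \<Gamma>\<lparr>carrier := H\<rparr>) (\<Gamma>\<lparr>carrier := H\<rparr>) \<and>
             \<omega> ` (H \<times> H) = H \<and>
             G_grp \<Gamma> \<omega> \<cong> G_grp (\<Gamma>\<lparr>carrier := H\<rparr>) \<omega>"
proof -
  have "G_grp \<Gamma> \<omega> \<cong> G_grp (\<Gamma>\<lparr>carrier := HH \<Gamma> \<omega>\<rparr>) \<omega>"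
    by (subst G_eq[OF assms]) (rule iso_refl)
  then show ?thesis using HH_subgroup[OF assms] HH_hom[OF assms] HH_image[OF assms] by blast
qed

end
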